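(* With the sets $E_n$ defined in the context, there is a constant $c>0$ independent of $n$ such that for every $n\ge2$, $$\mathrm{Fav}(E_n)\ \ge\ c\Big(\sum_{k=1}^{n-1}a_k\Big)^{-1}.$$
   Context: Construction. Let $f:\mathbb{R}\to\mathbb{R}$ be $f(x)=0$ for $x\in[0,\tfrac12)+\mathbb{Z}$ and $f(x)=\tfrac34$ for $x\in[\tfrac12,1)+\mathbb{Z}$. Let $g:\mathbb{N}\to\mathbb{R}_+$ be strictly increasing with $g(k)\to\infty$, and set $a_1=g(1)$, $a_k=\min\{1,g(k)-g(k-1)\}$ for $k\ge2$. Let $(m_k)_{k\ge1}$ be positive integers with $m_k>m_{k-1}$, $1000\cdot4^{-m_k}\le a_k4^{-m_{k-1}}$ and $1000\cdot4^{-m_k}\le a_{k-1}4^{-m_{k-1}}$ for all $k\ge2$. For $n\ge1$ define $f_n:[0,1]\to\mathbb{R}$ by $f_n(x)=f(2x)+\sum_{j=1}^{n}a_j4^{-m_j}f(2\cdot4^{m_j}x)$, let $s_n=\{0\}\times[0,4^{-m_n}]$, and $E_n=\overline{s_n+\operatorname{graph}f_n}$ (Minkowski sum, closure). Favard length: $\mathrm{Fav}(E)=\frac{1}{|S^1|}\int_{S^1}|p_\theta(E)|\,d\theta$ with $p_\theta(x)=x\cdot\theta$. *)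

theory Defs
  imports "HOL-Analysis.Analysis"
begin

definition step_f :: "real \<Rightarrow> real" where
  "step_f x = (if frac x < 1/2 then 0 else 3/4)"

definition a_seq :: "(nat \<Rightarrow> real) \<Rightarrow> nat \<Rightarrow> real" where
  "a_seq g k = (if k = 1 then g 1 else min 1 (g k - g (k - 1)))"

definition f_n :: "(nat \<Rightarrow> real) \<Rightarrow> (nat \<Rightarrow> nat) \<Rightarrow> nat \<Rightarrow> real \<Rightarrow> real" where
  "f_n g m n x = step_f (2 * x)
      + (\<Sum>j = 1..n. a_seq g j * (1 / 4 ^ m j) * step_f (2 * 4 ^ m j * x))"

text \<open>E_n = closure (s_n + graph f_n), with s_n = {0} x [0, 4^{-m_n}], graph over [0,1].\<close>
definition E_set :: "(nat \<Rightarrow> real) \<Rightarrow> (nat \<Rightarrow> nat) \<Rightarrow> nat \<Rightarrow> (real \<times> real) set" where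
  "E_set g m n = closure {(x, f_n g m n x + s) | x s.
      x \<in> {0..1} \<and> s \<in> {0..1 / 4 ^ m n}}"

definition proj_dir :: "real \<Rightarrow> real \<times> real \<Rightarrow> real" where
  "proj_dir t p = fst p * cos t + snd p * sin t"

text \<open>Favard length: (1/|S^1|) \<integral>_{S^1} |p_theta(E)| d theta, with |S^1| = 2 pi,
  parametrising S^1 by t \<in> [0, 2 pi].\<close>
definition favard_length :: "(real \<times> real) set \<Rightarrow> ennreal" where
  "favard_length E = ennreal (1 / (2 * pi)) *
     (\<integral>\<^sup>+ t. indicator {0..2*pi} t * emeasure lborel (proj_dir t ` E) \<partial>lborel)"

end

theory Submission
  imports Defs
begin


lemma step_f_piece:
  fixes p K :: nat and u :: real
  assumes K: "K > 0" and lo: "real p / real (2*K) \<le> u" and hi: "u < real (p+1) / real (2*K)"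
  shows "step_f u = (if p mod (2*K) < K then 0 else 3/4)"
proof -
  define N where "N = 2*K"
  define q where "q = p div N"
  define r where "r = p mod N"
  have N0: "real N > 0" using K by (simp add: N_def)
  have pq: "real p = real q * real N + real r"
    unfolding q_def r_def by (metis of_nat_add of_nat_mult div_mult_mod_eq)
  have rN: "r < N" using K unfolding r_def N_def by simp
  have lo': "real q + real r / real N \<le> u" using lo pq N0 unfolding N_def[symmetric]
    by (simp add: field_simps)
  have hi': "u < real q + (real r + 1) / real N" using hi pq N0 unfolding N_def[symmetric]
    by (simp add: field_simps)
  have r1: "(real r + 1) / real N \<le> 1" using rN N0 by (simp add: field_simps)
  have fl: "floor u = int q"
  proof -
    have "real q \<le> u" using lo' N0 by (smt (verit) divide_nonneg_pos of_nat_0_le_iff)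
    moreover have "u < real q + 1" using hi' r1 by linarith
    ultimately show ?thesis by (simp add: floor_eq_iff)
  qed
  have fr: "frac u = u - real q" using fl by (simp add: frac_def)
  show ?thesis
  proof (cases "r < K")
    case True
    then have "(real r + 1) / real N \<le> 1/2" using N0 unfolding N_def by (simp add: field_simps)
    then have "frac u < 1/2" using fr hi' by linarith
    then show ?thesis using True by (simp add: step_f_def r_def N_def)
  next
    case False
    then have "real r / real N \<ge> 1/2" using N0 unfolding N_def by (simp add: field_simps)
    then have "\<not> frac u < 1/2" using fr lo' by linarith
    then show ?thesis using False by (simp add: step_f_def r_def N_def)
  qed
qed



definition mm :: "(nat\<Rightarrow>nat) \<Rightarrow> nat \<Rightarrow> nat" where "mm m j = (if j = 0 then 0 else m j)"
definition bb :: "(nat\<Rightarrow>real) \<Rightarrow> nat \<Rightarrow> real" where "bb g j = (if j = 0 then 1 else a_seq g j)"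

lemma f_n_alt: "f_n g m n x = (\<Sum>j=0..n. bb g j * (1/4^mm m j) * step_f (2*4^mm m j * x))"
proof -
  have "(\<Sum>j=0..n. bb g j * (1/4^mm m j) * step_f (2*4^mm m j * x))
     = bb g 0 * (1/4^mm m 0) * step_f (2*4^mm m 0 * x) + (\<Sum>j=Suc 0..n. bb g j * (1/4^mm m j) * step_f (2*4^mm m j * x))"
    by (simp add: sum.atLeast_Suc_atMost)
  also have "(\<Sum>j=Suc 0..n. bb g j * (1/4^mm m j) * step_f (2*4^mm m j * x))
      = (\<Sum>j=1..n. a_seq g j * (1 / 4 ^ m j) * step_f (2 * 4 ^ m j * x))"
    by (rule sum.cong) (auto simp: bb_def mm_def)
  finally show ?thesis by (simp add: f_n_def bb_def mm_def)
qed

definition Tv :: "(nat\<Rightarrow>real) \<Rightarrow> (nat\<Rightarrow>nat) \<Rightarrow> nat \<Rightarrow> nat \<Rightarrow> nat \<Rightarrow> real" where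
  "Tv g m M j p = bb g j * (1/4^mm m j) * (if p mod (2*4^(M - mm m j)) < 4^(M - mm m j) then 0 else 3/4)"

definition Fv :: "(nat\<Rightarrow>real) \<Rightarrow> (nat\<Rightarrow>nat) \<Rightarrow> nat \<Rightarrow> nat \<Rightarrow> nat \<Rightarrow> real" where
  "Fv g m M n p = (\<Sum>j=0..n. Tv g m M j p)"

lemma pow4_split: "a \<le> M \<Longrightarrow> (4::real)^(M+1) = 4^a * 4^(M-a) * 4"
  by (metis add.commute le_add_diff_inverse power_add power_one_right)

lemma step_grid:
  fixes x :: real
  assumes aM: "a \<le> M" and lo: "real p / 4^(M+1) \<le> x" and hi: "x < (real p + 1) / 4^(M+1)"
  shows "step_f (2*4^a*x) = (if p mod (2*4^(M - a)) < 4^(M - a) then 0 else 3/4)"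
proof -
  define K :: nat where "K = 4^(M-a)"
  have K0: "K > 0" by (simp add: K_def)
  have P: "(4::real)^(M+1) = 4^a * real K * 4" using pow4_split[OF aM] by (simp add: K_def)
  have A: "real p / real (2*K) \<le> 2*4^a*x"
  proof -
    have "real p / real (2*K) = 2*4^a * (real p / 4^(M+1))" using P K0 by (simp add: field_simps)
    also have "\<dots> \<le> 2*4^a*x" by (rule mult_left_mono[OF lo]) simp
    finally show ?thesis .
  qed
  have B: "2*4^a*x < real (p+1) / real (2*K)"
  proof -
    have "real (p+1) / real (2*K) = 2*4^a * ((real p + 1) / 4^(M+1))" using P K0 by (simp add: field_simps)
    moreover have "2*4^a*x < 2*4^a * ((real p + 1) / 4^(M+1))" by (rule mult_strict_left_mono[OF hi]) simp
    ultimately show ?thesis by simp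
  qed
  show ?thesis using step_f_piece[OF K0 A B] by (simp add: K_def)
qed

lemma f_n_grid:
  assumes mmM: "\<And>j. j \<le> n \<Longrightarrow> mm m j \<le> M"
    and lo: "real p / 4^(M+1) \<le> x" and hi: "x < (real p + 1) / 4^(M+1)"
  shows "f_n g m n x = Fv g m M n p"
  unfolding f_n_alt Fv_def Tv_def
  by (rule sum.cong) (auto simp: step_grid[OF mmM lo hi])



lemma sum_geom:
  fixes R :: "nat \<Rightarrow> real"
  assumes nn: "\<And>j. i \<le> j \<Longrightarrow> 0 \<le> R j" and dec: "\<And>j. i \<le> j \<Longrightarrow> R (Suc j) \<le> R j / 2"
  shows "i \<le> n \<Longrightarrow> (\<Sum>j=i..n. R j) + R n \<le> 2 * R i"
proof (induction n)
  case 0 then show ?case by simp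
next
  case (Suc n)
  show ?case
  proof (cases "i = Suc n")
    case True then show ?thesis by simp
  next
    case False
    then have "i \<le> n" using Suc.prems by simp
    then have IH: "(\<Sum>j=i..n. R j) + R n \<le> 2 * R i" using Suc.IH by simp
    have "(\<Sum>j=i..Suc n. R j) = (\<Sum>j=i..n. R j) + R (Suc n)" using \<open>i \<le> n\<close> by simp
    moreover have "R (Suc n) \<le> R n / 2" using dec \<open>i \<le> n\<close> by simp
    ultimately show ?thesis using IH by linarith
  qed
qed

lemma sum_sub_geom:
  fixes R :: "nat \<Rightarrow> real"
  assumes nn: "\<And>j. 1 \<le> j \<Longrightarrow> 0 \<le> R j" and dec: "\<And>j. 1 \<le> j \<Longrightarrow> R (Suc j) \<le> R j / 2"
    and J: "J \<subseteq> {1..n}" "J \<noteq> {}"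
  shows "(\<Sum>j\<in>J. R j) \<le> 2 * R (Min J)"
proof -
  have fin: "finite J" using J finite_subset by blast
  define i where "i = Min J"
  have iJ: "i \<in> J" using fin J i_def by simp
  have i1: "1 \<le> i" using iJ J by auto
  have sub: "J \<subseteq> {i..n}" using J fin i_def by auto
  have "(\<Sum>j\<in>J. R j) \<le> (\<Sum>j=i..n. R j)"
    by (rule sum_mono2) (use sub i1 nn in auto)
  also have "\<dots> \<le> 2 * R i - R n"
    using sum_geom[of i R n] nn dec i1 iJ J by fastforce
  also have "\<dots> \<le> 2 * R i" using nn[of n] i1 iJ J by auto
  finally show ?thesis by (simp add: i_def)
qed

lemma dF_abstract:
  fixes T1 T2 R :: "nat \<Rightarrow> real"
  assumes nn: "\<And>j. 0 \<le> R j" and dec: "\<And>j. 1 \<le> j \<Longrightarrow> R (Suc j) \<le> R j / 2"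
    and notJ: "\<And>j. j \<le> n \<Longrightarrow> j \<notin> J \<Longrightarrow> T1 j \<le> T2 j"
    and inJ: "\<And>j. j \<le> n \<Longrightarrow> j \<in> J \<Longrightarrow> T1 j - R j \<le> T2 j"
    and RD: "\<And>j. j \<in> J \<Longrightarrow> R j \<le> D" and D0: "0 \<le> D"
    and J: "J \<subseteq> {0..n}"
  shows "(\<Sum>j=0..n. T1 j) - 3 * D \<le> (\<Sum>j=0..n. T2 j)"
proof -
  have fin: "finite J" using J finite_subset by blast
  have "(\<Sum>j=0..n. T1 j) - (\<Sum>j\<in>J. R j) = (\<Sum>j=0..n. T1 j) - (\<Sum>j=0..n. if j \<in> J then R j else 0)"
    using J by (simp add: sum.If_cases Int_absorb1)
  also have "\<dots> = (\<Sum>j=0..n. T1 j - (if j \<in> J then R j else 0))"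
    by (simp add: sum_subtractf)
  also have "\<dots> \<le> (\<Sum>j=0..n. T2 j)"
    by (rule sum_mono) (use notJ inJ in auto)
  finally have S1: "(\<Sum>j=0..n. T1 j) - (\<Sum>j\<in>J. R j) \<le> (\<Sum>j=0..n. T2 j)" .
  have split: "(\<Sum>j\<in>J. R j) = (\<Sum>j\<in>J \<inter> {0}. R j) + (\<Sum>j\<in>J - {0}. R j)"
    using fin by (metis Diff_disjoint Int_Diff_Un Int_commute sum.union_disjoint finite_Diff finite_Int Int_Diff_disjoint)
  have a: "(\<Sum>j\<in>J \<inter> {0}. R j) \<le> D"
    by (cases "0 \<in> J") (auto simp: RD D0)
  have b: "(\<Sum>j\<in>J - {0}. R j) \<le> 2 * D"
  proof (cases "J - {0} = {}")
    case True then show ?thesis using D0 by (simp only: sum.empty)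
  next
    case False
    have sub: "J - {0} \<subseteq> {1..n}" using J by auto
    have "(\<Sum>j\<in>J - {0}. R j) \<le> 2 * R (Min (J - {0}))"
      using sum_sub_geom[of R "J - {0}" n] nn dec sub False by blast
    moreover have "Min (J - {0}) \<in> J" using False fin by (metis Diff_subset Min_in finite_Diff subsetD)
    ultimately show ?thesis using RD by fastforce
  qed
  show ?thesis using S1 split a b by linarith
qed



definition NN :: "(nat\<Rightarrow>nat) \<Rightarrow> nat \<Rightarrow> nat \<Rightarrow> nat" where "NN m M j = 2*4^(M - mm m j)"
definition RR :: "(nat\<Rightarrow>real) \<Rightarrow> (nat\<Rightarrow>nat) \<Rightarrow> nat \<Rightarrow> real" where "RR g m j = 3/4 * bb g j / 4^mm m j"
definition rho :: "(nat\<Rightarrow>real) \<Rightarrow> (nat\<Rightarrow>nat) \<Rightarrow> nat \<Rightarrow> real \<Rightarrow> nat \<Rightarrow> real" where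
  "rho g m M t j = 16*t*RR g m j*4^(M+1)"
definition Good :: "(nat\<Rightarrow>real) \<Rightarrow> (nat\<Rightarrow>nat) \<Rightarrow> nat \<Rightarrow> nat \<Rightarrow> real \<Rightarrow> nat set" where
  "Good g m M n t = {p. p < 4^(M+1) \<and> (\<forall>j\<le>n. rho g m M t j \<le> real (NN m M j - p mod NN m M j))}"

lemma Tv_alt: "Tv g m M j p = bb g j * (1/4^mm m j) * (if p mod NN m M j < NN m M j div 2 then 0 else 3/4)"
  by (simp add: Tv_def NN_def)

lemma Tv_bounds: assumes "0 \<le> bb g j" shows "0 \<le> Tv g m M j p" "Tv g m M j p \<le> RR g m j"
  using assms by (auto simp: Tv_def RR_def)

lemma mod_mono_same_div:
  fixes p q N :: nat
  assumes "p \<le> q" "p div N = q div N"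
  shows "p mod N \<le> q mod N"
  by (metis assms add_le_cancel_left div_mult_mod_eq)

lemma Tv_mono: assumes "0 \<le> bb g j" "p \<le> q" "p div NN m M j = q div NN m M j"
  shows "Tv g m M j p \<le> Tv g m M j q"
proof -
  have "p mod NN m M j \<le> q mod NN m M j" using mod_mono_same_div assms(2,3) by blast
  then show ?thesis using assms(1) unfolding Tv_alt by (auto intro!: mult_left_mono)
qed

lemma level_far:
  fixes p q N :: nat
  assumes "p < q" "p div N \<noteq> q div N"
  shows "N - p mod N \<le> q - p"
proof -
  have "p div N \<le> q div N" using assms(1) div_le_mono by simp
  then have "Suc (p div N) \<le> q div N" using assms(2) by simp
  then have "Suc (p div N) * N \<le> q div N * N" by (rule mult_right_mono) simp
  also have "\<dots> \<le> q" by (simp add: div_times_less_eq_dividend)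
  finally have "p div N * N + N \<le> q" by simp
  moreover have "p = p div N * N + p mod N" by simp
  ultimately show ?thesis by linarith
qed

lemma dF_concrete:
  assumes bbnn: "\<And>j. 0 \<le> bb g j" and dec: "\<And>j. 1 \<le> j \<Longrightarrow> RR g m (Suc j) \<le> RR g m j / 2"
    and t0: "t > 0" and pG: "p \<in> Good g m M n t" and pq: "p < q"
  shows "Fv g m M n p - 3 * (real (q - p) / (16*t*4^(M+1))) \<le> Fv g m M n q"
  unfolding Fv_def
proof (rule dF_abstract[where R = "RR g m" and J = "{j\<in>{0..n}. p div NN m M j \<noteq> q div NN m M j}"])
  show "\<And>j. 0 \<le> RR g m j" using bbnn by (simp add: RR_def)
  show "\<And>j. 1 \<le> j \<Longrightarrow> RR g m (Suc j) \<le> RR g m j / 2" by (rule dec)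
  show "\<And>j. j \<le> n \<Longrightarrow> j \<notin> {j\<in>{0..n}. p div NN m M j \<noteq> q div NN m M j} \<Longrightarrow> Tv g m M j p \<le> Tv g m M j q"
    using Tv_mono bbnn pq by fastforce
  show "\<And>j. j \<le> n \<Longrightarrow> j \<in> {j\<in>{0..n}. p div NN m M j \<noteq> q div NN m M j} \<Longrightarrow> Tv g m M j p - RR g m j \<le> Tv g m M j q"
    using Tv_bounds bbnn by (smt (verit))
  show "0 \<le> real (q - p) / (16*t*4^(M+1))" using t0 by simp
  show "{j\<in>{0..n}. p div NN m M j \<noteq> q div NN m M j} \<subseteq> {0..n}" by auto
  fix j assume jJ: "j \<in> {j\<in>{0..n}. p div NN m M j \<noteq> q div NN m M j}"
  then have "NN m M j - p mod NN m M j \<le> q - p" using level_far pq by auto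
  then have "rho g m M t j \<le> real (q - p)" using pG jJ unfolding Good_def
    by (smt (verit, best) atLeastAtMost_iff mem_Collect_eq of_nat_le_iff)
  then have "16*t*4^(M+1) * RR g m j \<le> real (q - p)" by (simp add: rho_def mult_ac)
  then show "RR g m j \<le> real (q - p) / (16*t*4^(M+1))" using t0 by (simp add: field_simps)
qed



lemma card_small:
  fixes N :: nat and \<rho> :: real
  assumes "0 \<le> \<rho>"
  shows "real (card {r. r < N \<and> real (N - r) < \<rho>}) \<le> \<rho>"
proof -
  define S where "S = {r. r < N \<and> real (N - r) < \<rho>}"
  have inj: "inj_on (\<lambda>r. N - r) S" unfolding S_def by (auto simp: inj_on_def)
  have img: "(\<lambda>r. N - r) ` S \<subseteq> {1..<nat \<lceil>\<rho>\<rceil>}"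
  proof
    fix s assume "s \<in> (\<lambda>r. N - r) ` S"
    then obtain r where r: "r < N" "real (N - r) < \<rho>" "s = N - r" unfolding S_def by auto
    have "real s < \<rho>" using r by simp
    then have "int s < \<lceil>\<rho>\<rceil>" by linarith
    then show "s \<in> {1..<nat \<lceil>\<rho>\<rceil>}" using r by auto
  qed
  have "card S = card ((\<lambda>r. N - r) ` S)" using card_image[OF inj] by simp
  also have "\<dots> \<le> card {1..<nat \<lceil>\<rho>\<rceil>}" by (rule card_mono[OF _ img]) simp
  also have "\<dots> = nat \<lceil>\<rho>\<rceil> - 1" by simp
  finally have "real (card S) \<le> real (nat \<lceil>\<rho>\<rceil> - 1)" by simp
  also have "\<dots> \<le> \<rho>" using assms by (simp add: of_nat_diff) linarith
  finally show ?thesis by (simp add: S_def)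
qed

lemma card_bad:
  fixes N P :: nat and \<rho> :: real
  assumes "0 \<le> \<rho>" "N dvd P" "N > 0"
  shows "real (card {p. p < P \<and> real (N - p mod N) < \<rho>}) \<le> real (P div N) * \<rho>"
proof -
  define S where "S = {r. r < N \<and> real (N - r) < \<rho>}"
  have sub: "{p. p < P \<and> real (N - p mod N) < \<rho>} \<subseteq> (\<lambda>(k,r). k*N + r) ` ({..<P div N} \<times> S)"
  proof
    fix p assume p: "p \<in> {p. p < P \<and> real (N - p mod N) < \<rho>}"
    have "p div N < P div N" using p assms(2,3)
      by (metis dvd_div_mult_self less_mult_imp_div_less mem_Collect_eq)
    moreover have "p mod N \<in> S" using p assms(3) by (simp add: S_def)
    moreover have "p = p div N * N + p mod N" by simp
    ultimately show "p \<in> (\<lambda>(k,r). k*N + r) ` ({..<P div N} \<times> S)" by force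
  qed
  have finS: "finite S" unfolding S_def by auto
  have "card {p. p < P \<and> real (N - p mod N) < \<rho>} \<le> card ((\<lambda>(k,r). k*N + r) ` ({..<P div N} \<times> S))"
    by (rule card_mono[OF _ sub]) (simp add: finS)
  also have "\<dots> \<le> card ({..<P div N} \<times> S)" by (rule card_image_le) (simp add: finS)
  also have "\<dots> = (P div N) * card S" by (simp add: card_cartesian_product)
  finally have "real (card {p. p < P \<and> real (N - p mod N) < \<rho>}) \<le> real (P div N) * real (card S)"
    by (metis of_nat_le_iff of_nat_mult)
  also have "\<dots> \<le> real (P div N) * \<rho>"
    by (rule mult_left_mono) (use card_small[OF assms(1), of N] in \<open>simp_all add: S_def\<close>)
  finally show ?thesis .
qed

lemma NN_dvd:
  assumes "mm m j \<le> M"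
  shows "NN m M j dvd 4^(M+1)" "4^(M+1) div NN m M j = 2*4^mm m j" "NN m M j > 0"
proof -
  have e: "(4::nat)^(M+1) = NN m M j * (2*4^mm m j)"
    unfolding NN_def using assms
    by (metis (no_types, lifting) add.commute le_add_diff_inverse mult.assoc mult.commute mult_2 numeral_Bit0 power_add power_one_right)
  show "NN m M j dvd 4^(M+1)" using e by (metis dvd_triv_left)
  show "NN m M j > 0" by (simp add: NN_def)
  then show "4^(M+1) div NN m M j = 2*4^mm m j" using e by (metis nonzero_mult_div_cancel_left less_not_refl2)
qed

lemma card_Good:
  assumes bbnn: "\<And>j. 0 \<le> bb g j" and t0: "t > 0" and mmM: "\<And>j. j \<le> n \<Longrightarrow> mm m j \<le> M"
    and small: "48 * t * (\<Sum>j=0..n. bb g j) \<le> 1"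
  shows "real (4^(M+1)) / 2 \<le> real (card (Good g m M n t))"
proof -
  define P :: nat where "P = 4^(M+1)"
  define Bad where "Bad j = {p. p < P \<and> real (NN m M j - p mod NN m M j) < rho g m M t j}" for j
  have cov: "{..<P} \<subseteq> Good g m M n t \<union> (\<Union>j\<in>{0..n}. Bad j)"
    unfolding Good_def Bad_def P_def by force
  have fG: "finite (Good g m M n t)" unfolding Good_def by auto
  have fB: "\<And>j. finite (Bad j)" unfolding Bad_def by auto
  have "P = card {..<P}" by simp
  also have "\<dots> \<le> card (Good g m M n t \<union> (\<Union>j\<in>{0..n}. Bad j))"
    by (rule card_mono[OF _ cov]) (simp add: fG fB)
  also have "\<dots> \<le> card (Good g m M n t) + card (\<Union>j\<in>{0..n}. Bad j)" by (rule card_Un_le)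
  also have "\<dots> \<le> card (Good g m M n t) + (\<Sum>j=0..n. card (Bad j))"
    using card_UN_le[of "{0..n}" Bad] by simp
  finally have c1: "real P \<le> real (card (Good g m M n t)) + (\<Sum>j=0..n. real (card (Bad j)))"
    by (metis of_nat_add of_nat_le_iff of_nat_sum)
  have cb: "real (card (Bad j)) \<le> 24 * t * bb g j * real P" if "j \<le> n" for j
  proof -
    have r0: "0 \<le> rho g m M t j" using t0 bbnn[of j] by (simp add: rho_def RR_def)
    have "real (card (Bad j)) \<le> real (P div NN m M j) * rho g m M t j"
      unfolding Bad_def by (rule card_bad[OF r0]) (use NN_dvd[OF mmM[OF that]] in \<open>simp_all add: P_def\<close>)
    also have "\<dots> = 24 * t * bb g j * real P"
      using NN_dvd(2)[OF mmM[OF that]] by (simp add: P_def rho_def RR_def field_simps)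
    finally show ?thesis .
  qed
  have "(\<Sum>j=0..n. real (card (Bad j))) \<le> (\<Sum>j=0..n. 24 * t * bb g j * real P)"
    by (rule sum_mono) (use cb in auto)
  also have "\<dots> = (48 * t * (\<Sum>j=0..n. bb g j)) * (real P / 2)"
    by (simp add: sum_distrib_left sum_distrib_right field_simps)
  also have "\<dots> \<le> 1 * (real P / 2)" by (rule mult_right_mono[OF small]) simp
  finally show ?thesis using c1 by (simp add: P_def)
qed



lemma f_n_bounds:
  assumes bbnn: "\<And>j. 0 \<le> bb g j"
  shows "0 \<le> f_n g m n x" "f_n g m n x \<le> (\<Sum>j=0..n. bb g j)"
proof -
  have t: "0 \<le> bb g j * (1/4^mm m j) * step_f (2*4^mm m j * x) \<and> bb g j * (1/4^mm m j) * step_f (2*4^mm m j * x) \<le> bb g j" for j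
  proof -
    have s: "0 \<le> step_f y" "step_f y \<le> 1" for y by (auto simp: step_f_def)
    have c: "0 \<le> bb g j * (1/4^mm m j)" "bb g j * (1/4^mm m j) \<le> bb g j"
    proof -
      have "1 \<le> (4::real)^mm m j" by simp
      then have "bb g j * 1 \<le> bb g j * 4^mm m j" by (rule mult_left_mono) (use bbnn[of j] in simp)
      then show "0 \<le> bb g j * (1/4^mm m j)" "bb g j * (1/4^mm m j) \<le> bb g j"
        using bbnn[of j] by (auto simp: field_simps)
    qed
    show ?thesis using c s[of "2*4^mm m j * x"]
      by (smt (verit, best) mult_left_le mult_nonneg_nonneg)
  qed
  show "0 \<le> f_n g m n x" unfolding f_n_alt by (rule sum_nonneg) (use t in auto)
  show "f_n g m n x \<le> (\<Sum>j=0..n. bb g j)" unfolding f_n_alt by (rule sum_mono) (use t in auto)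
qed

lemma proj_meas:
  assumes bbnn: "\<And>j. 0 \<le> bb g j"
  shows "proj_dir t ` E_set g m n \<in> sets lborel"
proof -
  define X where "X = {(x, f_n g m n x + s) | x s. x \<in> {0..1} \<and> s \<in> {0..1 / 4 ^ m n}}"
  define B where "B = (\<Sum>j=0..n. bb g j) + 1"
  have sub: "X \<subseteq> {0..1} \<times> {0..B}"
  proof
    fix z assume "z \<in> X"
    then obtain x s where z: "z = (x, f_n g m n x + s)" "x \<in> {0..1}" "s \<in> {0..1 / 4 ^ m n}"
      unfolding X_def by blast
    have "1/4^m n \<le> (1::real)" by simp
    then have "s \<le> 1" using z(3) by (meson atLeastAtMost_iff order_trans)
    then show "z \<in> {0..1} \<times> {0..B}" using z f_n_bounds[OF bbnn, of m n x] by (auto simp: B_def)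
  qed
  have "compact ({0..1::real} \<times> {0..B})" by (intro compact_Times compact_Icc)
  then have "bounded X" using sub bounded_subset compact_imp_bounded by blast
  then have "compact (E_set g m n)" unfolding E_set_def X_def[symmetric] by simp
  moreover have "continuous_on UNIV (proj_dir t)" unfolding proj_dir_def by (intro continuous_intros)
  ultimately have "compact (proj_dir t ` E_set g m n)" by (meson compact_continuous_image continuous_on_subset top_greatest)
  then show ?thesis by (simp add: compact_imp_closed borel_closed)
qed



lemma cos_half: fixes t :: real assumes "0 \<le> t" "t \<le> 1" shows "1/2 \<le> cos t"
proof -
  have "t \<le> pi/3" using assms pi_gt3 by linarith
  then have "cos (pi/3) \<le> cos t" using assms by (intro cos_monotone_0_pi_le) auto
  then show ?thesis by (simp add: cos_60)
qed

lemma proj_bound: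
  assumes bbnn: "\<And>j. 0 \<le> bb g j" and dec: "\<And>j. 1 \<le> j \<Longrightarrow> RR g m (Suc j) \<le> RR g m j / 2"
    and mmM: "\<And>j. j \<le> n \<Longrightarrow> mm m j \<le> m n"
    and t0: "0 < t" and t1: "t \<le> 1" and small: "48 * t * (\<Sum>j=0..n. bb g j) \<le> 1"
  shows "ennreal (1/8) \<le> emeasure lborel (proj_dir t ` E_set g m n)"
proof -
  define M where "M = m n"
  define P :: real where "P = 4^(M+1)"
  have P0: "P > 0" by (simp add: P_def)
  have ct: "1/2 \<le> cos t" using cos_half t0 t1 by force
  have st: "0 \<le> sin t" "sin t \<le> t" using t0 t1 sin_x_le_x[of t] by (auto intro!: sin_ge_zero) (use pi_gt3 in linarith)
  define \<phi> where "\<phi> p = real p / P * cos t + Fv g m M n p * sin t" for p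
  define I where "I p = {\<phi> p ..< \<phi> p + 1/(4*P)}" for p
  define G where "G = Good g m M n t"
  have mmM': "\<And>j. j \<le> n \<Longrightarrow> mm m j \<le> M" using mmM by (simp add: M_def)
  have inc: "I p \<subseteq> proj_dir t ` E_set g m n" if pG: "p \<in> G" for p
  proof
    fix v assume v: "v \<in> I p"
    have "p < 4^(M+1)" using pG unfolding G_def Good_def by simp
    then have "Suc p \<le> 4^(M+1)" by simp
    then have "real (Suc p) \<le> real ((4::nat)^(M+1))" by (simp only: of_nat_le_iff)
    then have pP: "real p + 1 \<le> P" unfolding P_def by simp
    define x where "x = (v - Fv g m M n p * sin t) / cos t"
    have cpos: "cos t > 0" using ct by linarith
    have xd: "x - real p / P = (v - \<phi> p) / cos t" using cpos unfolding x_def \<phi>_def by (simp add: field_simps)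
    have v1: "0 \<le> v - \<phi> p" "v - \<phi> p < 1/(4*P)" using v unfolding I_def by auto
    have "(v - \<phi> p) / cos t \<le> (v - \<phi> p) / (1/2)"
      by (rule divide_left_mono) (use v1 ct cpos in auto)
    moreover have "(v - \<phi> p) * 2 < 2 * (1/(4*P))" using v1 by simp
    moreover have "2 * (1/(4*P)) < 1/P" using P0 by (simp add: field_simps)
    ultimately have "x - real p / P < 1 / P" using xd by simp
    moreover have "(real p + 1) / P = real p / P + 1 / P" by (simp add: add_divide_distrib)
    ultimately have xhi: "x < (real p + 1) / P" by linarith
    have "0 \<le> (v - \<phi> p) / cos t" using v1 cpos by simp
    then have xlo: "real p / P \<le> x" using xd by linarith
    have x01: "x \<in> {0..1}"
    proof -
      have "0 \<le> real p / P" using P0 by simp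
      moreover have "(real p + 1) / P \<le> 1" using pP P0 by simp
      ultimately show ?thesis using xlo xhi by auto
    qed
    have fx: "f_n g m n x = Fv g m M n p"
      by (rule f_n_grid[OF mmM']) (use xlo xhi in \<open>simp_all add: P_def\<close>)
    have mem: "(x, f_n g m n x + 0) \<in> E_set g m n"
      unfolding E_set_def by (rule subsetD[OF closure_subset]) (use x01 in auto)
    have "proj_dir t (x, f_n g m n x + 0) = x * cos t + Fv g m M n p * sin t"
      by (simp add: proj_dir_def fx)
    also have "\<dots> = v" using cpos unfolding x_def by (simp add: field_simps)
    finally have "proj_dir t (x, f_n g m n x + 0) = v" .
    then show "v \<in> proj_dir t ` E_set g m n" using mem by force
  qed
  have ord: "\<phi> p + 1/(4*P) \<le> \<phi> q" if pG: "p \<in> G" and pq: "p < q" for p q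
  proof -
    define d where "d = real (q - p) / P"
    have d1: "1/P \<le> d" using pq P0 unfolding d_def by (simp add: divide_right_mono)
    have d0: "0 \<le> d" unfolding d_def using P0 by simp
    have dF: "Fv g m M n p - 3 * (d / (16*t)) \<le> Fv g m M n q"
      using dF_concrete[OF bbnn dec t0 pG[unfolded G_def] pq] unfolding d_def P_def by (simp add: field_simps)
    define \<Delta> where "\<Delta> = Fv g m M n q - Fv g m M n p"
    have "\<Delta> * sin t \<ge> - 3 * d / 16"
    proof (cases "\<Delta> \<ge> 0")
      case True
      have "0 \<le> d" unfolding d_def using P0 by simp
      moreover have "0 \<le> \<Delta> * sin t" using True st by simp
      ultimately show ?thesis by linarith
    next
      case False
      then have "\<Delta> * sin t \<ge> \<Delta> * t" using st by (simp add: mult_left_mono_neg)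
      moreover have "\<Delta> * t \<ge> - 3 * d / 16" using dF t0 unfolding \<Delta>_def by (simp add: field_simps)
      ultimately show ?thesis by linarith
    qed
    moreover have "\<phi> q - \<phi> p = d * cos t + \<Delta> * sin t"
      unfolding \<phi>_def d_def \<Delta>_def using pq P0 by (simp add: of_nat_diff diff_divide_distrib left_diff_distrib algebra_simps)
    moreover have "d * cos t \<ge> d * (1/2)"
      by (rule mult_left_mono[OF ct]) (use P0 in \<open>simp add: d_def\<close>)
    ultimately have "\<phi> q - \<phi> p \<ge> 5 * d / 16" by linarith
    moreover have "1/(4*P) = (1/P)/4" by simp
    moreover have "0 < 1/P" using P0 by simp
    ultimately show ?thesis using d1 by linarith
  qed
  have disj: "disjoint_family_on I G"
    unfolding disjoint_family_on_def
  proof (intro ballI impI)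
    fix p q assume "p \<in> G" "q \<in> G" "p \<noteq> q"
    then show "I p \<inter> I q = {}"
    proof (cases "p < q")
      case True then show ?thesis using ord[of p q] \<open>p \<in> G\<close> unfolding I_def by auto
    next
      case False then have "q < p" using \<open>p \<noteq> q\<close> by simp
      then show ?thesis using ord[of q p] \<open>q \<in> G\<close> unfolding I_def by auto
    qed
  qed
  have finG: "finite G" unfolding G_def Good_def by auto
  have "(\<Sum>p\<in>G. emeasure lborel (I p)) = emeasure lborel (\<Union>p\<in>G. I p)"
    by (rule sum_emeasure[OF _ disj finG]) (auto simp: I_def)
  moreover have "(\<Sum>p\<in>G. emeasure lborel (I p)) = ennreal (real (card G) / (4*P))"
  proof -
    have e: "emeasure lborel (I p) = ennreal (1/(4*P))" for p
      unfolding I_def using P0 by (subst emeasure_lborel_Ico) auto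
    have "(\<Sum>p\<in>G. emeasure lborel (I p)) = of_nat (card G) * ennreal (1/(4*P))"
      by (simp only: e sum_constant)
    also have "\<dots> = ennreal (real (card G)) * ennreal (1/(4*P))"
      by (simp only: ennreal_of_nat_eq_real_of_nat)
    also have "\<dots> = ennreal (real (card G) * (1/(4*P)))"
      by (rule ennreal_mult''[symmetric]) (use P0 in simp)
    finally show ?thesis by simp
  qed
  moreover have "real (card G) / (4*P) \<ge> 1/8"
  proof -
    have "real (4^(M+1)) / 2 \<le> real (card G)"
      unfolding G_def by (rule card_Good[OF bbnn t0 mmM' small])
    then have "P/2 \<le> real (card G)" by (simp add: P_def)
    then show ?thesis using P0 by (simp add: field_simps)
  qed
  moreover have "emeasure lborel (\<Union>p\<in>G. I p) \<le> emeasure lborel (proj_dir t ` E_set g m n)"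
    by (rule emeasure_mono[OF _ proj_meas[OF bbnn]]) (use inc in blast)
  ultimately have "ennreal (real (card G) / (4*P)) \<le> emeasure lborel (proj_dir t ` E_set g m n)"
    by simp
  moreover have "ennreal (1/8) \<le> ennreal (real (card G) / (4*P))"
    by (rule ennreal_leI) fact
  ultimately show ?thesis by (rule order_trans[rotated])
qed



theorem proposition4:
  fixes g :: "nat \<Rightarrow> real" and m :: "nat \<Rightarrow> nat"
  assumes g_pos: "\<And>k. k \<ge> 1 \<Longrightarrow> g k > 0"
    and g_mono: "\<And>k l. 1 \<le> k \<Longrightarrow> k < l \<Longrightarrow> g k < g l"
    and g_lim: "filterlim g at_top sequentially"
    and m_pos: "\<And>k. k \<ge> 1 \<Longrightarrow> m k > 0"
    and m_mono: "\<And>k. k \<ge> 2 \<Longrightarrow> m k > m (k - 1)"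
    and m_cond1: "\<And>k. k \<ge> 2 \<Longrightarrow>
        1000 * (1 / 4 ^ m k) \<le> a_seq g k * (1 / 4 ^ m (k - 1))"
    and m_cond2: "\<And>k. k \<ge> 2 \<Longrightarrow>
        1000 * (1 / 4 ^ m k) \<le> a_seq g (k - 1) * (1 / 4 ^ m (k - 1))"
  shows "\<exists>c > 0. \<forall>n \<ge> 2.
           ennreal (c / (\<Sum>k = 1..n - 1. a_seq g k)) \<le> favard_length (E_set g m n)"
proof -
  have a_nn: "0 \<le> a_seq g k" if "k \<ge> 1" for k
  proof (cases "k = 1")
    case True then show ?thesis using g_pos[of 1] by (simp add: a_seq_def)
  next
    case False
    then have "g (k-1) < g k" using g_mono[of "k-1" k] that by simp
    then show ?thesis using False by (simp add: a_seq_def)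
  qed
  have a_le1: "a_seq g k \<le> 1" if "k \<ge> 2" for k using that by (simp add: a_seq_def)
  have bbnn: "0 \<le> bb g j" for j using a_nn[of j] by (cases "j = 0") (auto simp: bb_def)
  have dec: "RR g m (Suc j) \<le> RR g m j / 2" if j1: "1 \<le> j" for j
  proof -
    have c2: "1000 * (1 / 4 ^ m (Suc j)) \<le> a_seq g j * (1 / 4 ^ m j)" using m_cond2[of "Suc j"] j1 by simp
    have "a_seq g (Suc j) * (1 / 4 ^ m (Suc j)) \<le> 1 * (1 / 4 ^ m (Suc j))"
      by (rule mult_right_mono) (use a_le1[of "Suc j"] j1 in auto)
    then have "RR g m (Suc j) \<le> 3/4 * (1 / 4 ^ m (Suc j))" by (simp add: RR_def bb_def mm_def)
    also have "\<dots> \<le> 3/4 * (a_seq g j * (1 / 4 ^ m j) / 1000)" using c2 by simp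
    also have "\<dots> \<le> RR g m j / 2" using j1 a_nn[of j]
      by (simp add: RR_def bb_def mm_def, intro divide_left_mono) auto
    finally show ?thesis .
  qed
  have m_le: "m j \<le> m (j + d)" if "1 \<le> j" for j d
  proof (induction d)
    case 0 then show ?case by simp
  next
    case (Suc d)
    have "m (j + d) < m (j + Suc d)" using m_mono[of "j + Suc d"] that by simp
    then show ?case using Suc by simp
  qed
  define g1 where "g1 = g 1"
  have g1p: "g1 > 0" using g_pos[of 1] by (simp add: g1_def)
  define c where "c = g1 / (768 * pi * (g1 + 2))"
  have cp: "c > 0" using g1p by (simp add: c_def)
  show ?thesis
  proof (intro exI[of _ c] conjI allI impI cp)
    fix n :: nat assume n2: "2 \<le> n"
    define S where "S = (\<Sum>k = 1..n - 1. a_seq g k)"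
    define Sb where "Sb = (\<Sum>j=0..n. bb g j)"
    have S_ge: "g1 \<le> S"
    proof -
      have "S = a_seq g 1 + (\<Sum>k = Suc 1..n - 1. a_seq g k)" unfolding S_def
        using n2 by (subst sum.atLeast_Suc_atMost) auto
      moreover have "0 \<le> (\<Sum>k = Suc 1..n - 1. a_seq g k)" by (rule sum_nonneg) (use a_nn in auto)
      ultimately show ?thesis by (simp add: a_seq_def g1_def)
    qed
    have Sb_eq: "Sb = 1 + S + a_seq g n"
    proof -
      have "Sb = bb g 0 + (\<Sum>j=Suc 0..n. bb g j)" unfolding Sb_def by (subst sum.atLeast_Suc_atMost) auto
      also have "(\<Sum>j=Suc 0..n. bb g j) = (\<Sum>j=1..n. a_seq g j)" by (rule sum.cong) (auto simp: bb_def)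
      also have "(\<Sum>j=1..n. a_seq g j) = S + a_seq g n"
      proof -
        obtain k where k: "n = Suc k" using n2 by (cases n) auto
        have "1 \<le> Suc k" by simp
        then show ?thesis using k by (simp add: S_def)
      qed
      finally show ?thesis by (simp add: bb_def)
    qed
    have Sb_le: "Sb \<le> S + 2" using Sb_eq a_le1[OF n2] by simp
    have Sb1: "1 \<le> Sb" using Sb_eq S_ge g1p a_nn[of n] n2 by simp
    define t0 where "t0 = 1 / (48 * Sb)"
    have t0p: "0 < t0" using Sb1 by (simp add: t0_def)
    have t01: "t0 \<le> 1" using Sb1 by (simp add: t0_def field_simps)
    have mmM: "mm m j \<le> m n" if "j \<le> n" for j
    proof (cases "j = 0")
      case True then show ?thesis by (simp add: mm_def)
    next
      case False
      then have "m j \<le> m (j + (n - j))" using m_le[of j "n - j"] by simp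
      then show ?thesis using False that by (simp add: mm_def)
    qed
    have pb: "ennreal (1/8) \<le> emeasure lborel (proj_dir t ` E_set g m n)" if t: "t \<in> {0<..t0}" for t
    proof (rule proj_bound[OF bbnn dec mmM])
      show "0 < t" using t by simp
      show "t \<le> 1" using t t01 by simp
      have "48 * t * Sb \<le> 48 * t0 * Sb" using t Sb1 by simp
      also have "\<dots> = 1" using Sb1 by (simp add: t0_def)
      finally show "48 * t * (\<Sum>j=0..n. bb g j) \<le> 1" by (simp add: Sb_def)
    qed auto
    have "(\<integral>\<^sup>+ t. ennreal (1/8) * indicator {0<..t0} t \<partial>lborel)
        \<le> (\<integral>\<^sup>+ t. indicator {0..2*pi} t * emeasure lborel (proj_dir t ` E_set g m n) \<partial>lborel)"
    proof (rule nn_integral_mono)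
      fix t :: real
      show "ennreal (1/8) * indicator {0<..t0} t \<le> indicator {0..2*pi} t * emeasure lborel (proj_dir t ` E_set g m n)"
      proof (cases "t \<in> {0<..t0}")
        case True
        have "t \<in> {0..2*pi}" using True t01 pi_gt3 by auto
        then show ?thesis using True pb[OF True] by simp
      next
        case False then show ?thesis by simp
      qed
    qed
    moreover have "(\<integral>\<^sup>+ t. ennreal (1/8) * indicator {0<..t0} t \<partial>lborel) = ennreal (1/8) * ennreal t0"
      using t0p by (subst nn_integral_cmult_indicator) auto
    ultimately have I: "ennreal (1/8) * ennreal t0 \<le> (\<integral>\<^sup>+ t. indicator {0..2*pi} t * emeasure lborel (proj_dir t ` E_set g m n) \<partial>lborel)"
      by simp
    have "ennreal (1/(2*pi)) * (ennreal (1/8) * ennreal t0) \<le> favard_length (E_set g m n)"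
      unfolding favard_length_def by (rule mult_left_mono[OF I]) simp
    moreover have "ennreal (1/(2*pi)) * (ennreal (1/8) * ennreal t0) = ennreal (t0 / (16*pi))"
      using t0p by (simp add: ennreal_mult[symmetric] field_simps)
    moreover have "c / S \<le> t0 / (16*pi)"
    proof -
      have Sp: "0 < S" using S_ge g1p by simp
      have "g1 * Sb \<le> g1 * (S + 2)" using Sb_le g1p by simp
      also have "\<dots> \<le> (g1 + 2) * S" using S_ge by (simp add: algebra_simps)
      finally have key: "g1 * Sb \<le> (g1 + 2) * S" .
      have "c / S = g1 / (768 * pi * (g1 + 2) * S)" by (simp add: c_def)
      also have "\<dots> \<le> 1 / (768 * pi * Sb)"
      proof (rule mult_imp_div_pos_le)
        show "0 < 768 * pi * (g1 + 2) * S" using Sp g1p pi_gt_zero by simp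
        have "g1 \<le> (g1+2)*S/Sb" using key Sb1 by (simp add: le_divide_eq)
        also have "(g1+2)*S/Sb = 1 / (768 * pi * Sb) * (768 * pi * (g1 + 2) * S)"
          using Sb1 pi_gt_zero by (simp add: field_simps)
        finally show "g1 \<le> 1 / (768 * pi * Sb) * (768 * pi * (g1 + 2) * S)" .
      qed
      also have "\<dots> = t0 / (16*pi)" by (simp add: t0_def field_simps)
      finally show ?thesis .
    qed
    ultimately have "ennreal (t0 / (16*pi)) \<le> favard_length (E_set g m n)"
      "ennreal (c / S) \<le> ennreal (t0 / (16*pi))" by (simp_all add: ennreal_leI)
    then show "ennreal (c / (\<Sum>k = 1..n - 1. a_seq g k)) \<le> favard_length (E_set g m n)"
      unfolding S_def[symmetric] by (rule order_trans[rotated])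
  qed
qed


end
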